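(* Let $(G,M,\Delta)$ be a Garside structure and $(H,N,\delta)$ a parabolic substructure with $H\neq G$ and $H\neq\{1\}$. Let $\mathcal S=\mathrm{Div}(\Delta)\setminus\{1\}$ and $d$ the word metric on $G$ with respect to $\mathcal S$. Then $G$ does not have bounded projections on $H$: there is no constant $K>0$ such that $\mathrm{diam}(\pi_H(\alpha_1)\cup\pi_H(\alpha_2))\le K$ for all $\alpha_1,\alpha_2\in G$ with $d(\alpha_1,\alpha_2)=1$.
   Context: Let $G$ be a group and $M$ a submonoid with $M\cap M^{-1}=\{1\}$. Define $\alpha\le_L\beta$ iff $\alpha^{-1}\beta\in M$, and $\alpha\le_R\beta$ iff $\beta\alpha^{-1}\in M$. For $a\in M$ let $\mathrm{Div}_L(a)=\{b\in M: b\le_L a\}$, $\mathrm{Div}_R(a)=\{b\in M: b\le_R a\}$; $a$ is balanced if these coincide, and then $\mathrm{Div}(a)$ denotes this set. $M$ is Noetherian if each $a\in M$ admits an $n$ such that $a$ is not a product of more than $n$ non-trivial factors. A Garside structure $(G,M,\Delta)$: $\Delta\in M$ balanced, $M$ Noetherian, $\mathrm{Div}(\Delta)$ finite and generating $M$ as a monoid and $G$ as a group, $(G,\le_L)$ a lattice. A parabolic substructure $(H,N,\delta)$: $\delta\in M$ balanced, $H$ (resp. $N$) the subgroup (resp. submonoid) generated by $\mathrm{Div}(\delta)$, and $\mathrm{Div}(\delta)=\mathrm{Div}(\Delta)\cap N$. $d(\alpha,\beta)=\lg(\alpha^{-1}\beta)$ with $\lg$ word length w.r.t. $\mathcal S$;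 $d(\alpha,H)=\min_{\beta\in H}d(\alpha,\beta)$; $\pi_H(\alpha)=\{\beta\in H: d(\alpha,\beta)=d(\alpha,H)\}$; $\mathrm{diam}(X)=\max\{d(\alpha,\beta):\alpha,\beta\in X\}$. *)

theory Defs
  imports Complex_Main "HOL-Algebra.Generated_Groups"
begin

definition wprod :: "('a, 'b) monoid_scheme \<Rightarrow> 'a list \<Rightarrow> 'a" where
  "wprod G ws = foldr (\<lambda>x y. x \<otimes>\<^bsub>G\<^esub> y) ws \<one>\<^bsub>G\<^esub>"

definition monoid_gen :: "('a, 'b) monoid_scheme \<Rightarrow> 'a set \<Rightarrow> 'a set" where
  "monoid_gen G S = {wprod G ws | ws. set ws \<subseteq> S}"

definition leL :: "('a, 'b) monoid_scheme \<Rightarrow> 'a set \<Rightarrow> 'a \<Rightarrow> 'a \<Rightarrow> bool" where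
  "leL G M a b \<longleftrightarrow> inv\<^bsub>G\<^esub> a \<otimes>\<^bsub>G\<^esub> b \<in> M"

definition leR :: "('a, 'b) monoid_scheme \<Rightarrow> 'a set \<Rightarrow> 'a \<Rightarrow> 'a \<Rightarrow> bool" where
  "leR G M a b \<longleftrightarrow> b \<otimes>\<^bsub>G\<^esub> inv\<^bsub>G\<^esub> a \<in> M"

definition DivL :: "('a, 'b) monoid_scheme \<Rightarrow> 'a set \<Rightarrow> 'a \<Rightarrow> 'a set" where
  "DivL G M a = {b \<in> M. leL G M b a}"

definition DivR :: "('a, 'b) monoid_scheme \<Rightarrow> 'a set \<Rightarrow> 'a \<Rightarrow> 'a set" where
  "DivR G M a = {b \<in> M. leR G M b a}"

definition balanced :: "('a, 'b) monoid_scheme \<Rightarrow> 'a set \<Rightarrow> 'a \<Rightarrow> bool" where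
  "balanced G M a \<longleftrightarrow> a \<in> M \<and> DivL G M a = DivR G M a"

text \<open>For balanced elements, Div a denotes the common set of divisors.\<close>
definition Div :: "('a, 'b) monoid_scheme \<Rightarrow> 'a set \<Rightarrow> 'a \<Rightarrow> 'a set" where
  "Div G M a = DivL G M a"

definition pos_submonoid :: "('a, 'b) monoid_scheme \<Rightarrow> 'a set \<Rightarrow> bool" where
  "pos_submonoid G M \<longleftrightarrow> group G \<and> M \<subseteq> carrier G \<and> \<one>\<^bsub>G\<^esub> \<in> M
     \<and> (\<forall>x\<in>M. \<forall>y\<in>M. x \<otimes>\<^bsub>G\<^esub> y \<in> M)
     \<and> M \<inter> (\<lambda>x. inv\<^bsub>G\<^esub> x) ` M = {\<one>\<^bsub>G\<^esub>}"

definition noetherian :: "('a, 'b) monoid_scheme \<Rightarrow> 'a set \<Rightarrow> bool" where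
  "noetherian G M \<longleftrightarrow> (\<forall>a\<in>M. \<exists>n::nat. \<forall>ws. set ws \<subseteq> M - {\<one>\<^bsub>G\<^esub>} \<and> wprod G ws = a
        \<longrightarrow> length ws \<le> n)"

definition leL_lattice :: "('a, 'b) monoid_scheme \<Rightarrow> 'a set \<Rightarrow> bool" where
  "leL_lattice G M \<longleftrightarrow>
     (\<forall>a\<in>carrier G. \<forall>b\<in>carrier G.
        (\<exists>c\<in>carrier G. leL G M a c \<and> leL G M b c \<and>
            (\<forall>e\<in>carrier G. leL G M a e \<and> leL G M b e \<longrightarrow> leL G M c e)) \<and>
        (\<exists>c\<in>carrier G. leL G M c a \<and> leL G M c b \<and>
            (\<forall>e\<in>carrier G. leL G M e a \<and> leL G M e b \<longrightarrow> leL G M e c)))"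

definition garside_structure :: "('a, 'b) monoid_scheme \<Rightarrow> 'a set \<Rightarrow> 'a \<Rightarrow> bool" where
  "garside_structure G M \<Delta> \<longleftrightarrow>
     pos_submonoid G M \<and> balanced G M \<Delta> \<and> noetherian G M \<and>
     finite (Div G M \<Delta>) \<and>
     monoid_gen G (Div G M \<Delta>) = M \<and>
     generate G (Div G M \<Delta>) = carrier G \<and>
     leL_lattice G M"

definition parabolic_substructure ::
  "('a, 'b) monoid_scheme \<Rightarrow> 'a set \<Rightarrow> 'a \<Rightarrow> 'a set \<Rightarrow> 'a set \<Rightarrow> 'a \<Rightarrow> bool" where
  "parabolic_substructure G M \<Delta> H N \<delta> \<longleftrightarrow>
     \<delta> \<in> M \<and> balanced G M \<delta> \<and>
     H = generate G (Div G M \<delta>) \<and>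
     N = monoid_gen G (Div G M \<delta>) \<and>
     Div G M \<delta> = Div G M \<Delta> \<inter> N"

definition word_len :: "('a, 'b) monoid_scheme \<Rightarrow> 'a set \<Rightarrow> 'a \<Rightarrow> nat" where
  "word_len G S x = (LEAST n. \<exists>ws. length ws = n \<and>
       set ws \<subseteq> S \<union> (\<lambda>s. inv\<^bsub>G\<^esub> s) ` S \<and> wprod G ws = x)"

definition wdist :: "('a, 'b) monoid_scheme \<Rightarrow> 'a set \<Rightarrow> 'a \<Rightarrow> 'a \<Rightarrow> nat" where
  "wdist G S a b = word_len G S (inv\<^bsub>G\<^esub> a \<otimes>\<^bsub>G\<^esub> b)"

definition set_dist :: "('a, 'b) monoid_scheme \<Rightarrow> 'a set \<Rightarrow> 'a \<Rightarrow> 'a set \<Rightarrow> nat" where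
  "set_dist G S a H = (LEAST n. \<exists>b\<in>H. wdist G S a b = n)"

definition proj :: "('a, 'b) monoid_scheme \<Rightarrow> 'a set \<Rightarrow> 'a set \<Rightarrow> 'a \<Rightarrow> 'a set" where
  "proj G S H a = {b \<in> H. wdist G S a b = set_dist G S a H}"

definition diam_le :: "('a, 'b) monoid_scheme \<Rightarrow> 'a set \<Rightarrow> 'a set \<Rightarrow> real \<Rightarrow> bool" where
  "diam_le G S X K \<longleftrightarrow> (\<forall>a\<in>X. \<forall>b\<in>X. real (wdist G S a b) \<le> K)"

end

theory Submission
  imports Defs
begin

lemma (in group) wprod_closed: "set ws \<subseteq> carrier G \<Longrightarrow> wprod G ws \<in> carrier G"
  by (induct ws) (auto simp: wprod_def)

lemma (in group) wprod_append: "set xs \<subseteq> carrier G \<Longrightarrow> set ys \<subseteq> carrier G \<Longrightarrow>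
   wprod G (xs @ ys) = wprod G xs \<otimes> wprod G ys"
  by (induct xs) (auto simp: wprod_def m_assoc wprod_closed[unfolded wprod_def])

lemma wprod_Cons: "wprod G (x # xs) = x \<otimes>\<^bsub>G\<^esub> wprod G xs"
  by (simp add: wprod_def)
lemma wprod_Nil: "wprod G [] = \<one>\<^bsub>G\<^esub>"
  by (simp add: wprod_def)

locale gar = group G for G (structure) +
  fixes M \<Delta> H N \<delta>
  assumes gs: "garside_structure G M \<Delta>" and ps: "parabolic_substructure G M \<Delta> H N \<delta>"
    and HneG: "H \<noteq> carrier G" and Hne1: "H \<noteq> {\<one>}"
begin

lemma M_carr: "M \<subseteq> carrier G" and one_M: "\<one> \<in> M"
  and M_mult: "x \<in> M \<Longrightarrow> y \<in> M \<Longrightarrow> x \<otimes> y \<in> M"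
  and M_inv: "x \<in> M \<Longrightarrow> inv x \<in> M \<Longrightarrow> x = \<one>"
proof -
  have p: "pos_submonoid G M" using gs by (simp add: garside_structure_def)
  show "M \<subseteq> carrier G" "\<one> \<in> M" using p by (auto simp: pos_submonoid_def)
  show "x \<in> M \<Longrightarrow> y \<in> M \<Longrightarrow> x \<otimes> y \<in> M" using p by (auto simp: pos_submonoid_def)
  assume "x \<in> M" "inv x \<in> M"
  then have "x \<in> M \<inter> (\<lambda>x. inv x) ` M" using \<open>M \<subseteq> carrier G\<close>
    by (metis IntI image_eqI inv_inv subsetD)
  then show "x = \<one>" using p by (auto simp: pos_submonoid_def)
qed

lemma M_carrI[intro]: "x \<in> M \<Longrightarrow> x \<in> carrier G" using M_carr by auto

lemma monoid_gen_M: "set ws \<subseteq> M \<Longrightarrow> wprod G ws \<in> M"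
  by (induct ws) (auto simp: wprod_Cons wprod_Nil one_M M_mult)

lemma leL_trans: "leL G M a b \<Longrightarrow> leL G M b c \<Longrightarrow> a \<in> carrier G \<Longrightarrow> b \<in> carrier G \<Longrightarrow> c \<in> carrier G \<Longrightarrow> leL G M a c"
  unfolding leL_def
proof -
  assume h1: "inv a \<otimes> b \<in> M" and h2: "inv b \<otimes> c \<in> M" and c: "a \<in> carrier G" "b \<in> carrier G" "c \<in> carrier G"
  have "(inv a \<otimes> b) \<otimes> (inv b \<otimes> c) \<in> M" by (rule M_mult[OF h1 h2])
  also have "(inv a \<otimes> b) \<otimes> (inv b \<otimes> c) = inv a \<otimes> c" using c
    by (simp add: m_assoc[symmetric]) (simp add: m_assoc)
  finally show "inv a \<otimes> c \<in> M" .
qed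

lemma leL_refl: "a \<in> carrier G \<Longrightarrow> leL G M a a" by (simp add: leL_def one_M)

lemma leL_cancel: "a \<in> carrier G \<Longrightarrow> x \<in> carrier G \<Longrightarrow> y \<in> carrier G \<Longrightarrow> leL G M (a \<otimes> x) (a \<otimes> y) = leL G M x y"
  unfolding leL_def by (simp add: inv_mult_group m_assoc[symmetric]) (simp add: m_assoc)

lemma balanced_props:
  assumes "balanced G M e"
  shows "e \<in> M" and "Div G M e = {b \<in> M. inv b \<otimes> e \<in> M}" and "Div G M e = {b \<in> M. e \<otimes> inv b \<in> M}"
  using assms by (auto simp: balanced_def Div_def DivL_def DivR_def leL_def leR_def)

lemma Div_carr: "Div G M e \<subseteq> M" by (auto simp: Div_def DivL_def)

lemma div_compl:
  assumes "balanced G M e" "a \<in> Div G M e"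
  shows "inv a \<otimes> e \<in> Div G M e"
proof -
  note b = balanced_props[OF assms(1)]
  have a: "a \<in> M" "inv a \<otimes> e \<in> M" "e \<otimes> inv a \<in> M" using assms b by auto
  have ec: "a \<in> carrier G" "e \<in> carrier G" using a b by auto
  have "e \<otimes> inv (inv a \<otimes> e) = a" using ec
    by (simp add: inv_mult_group m_assoc[symmetric])
  then show ?thesis using a b(3) by auto
qed

lemma div_conjL:
  assumes "balanced G M e" "a \<in> Div G M e"
  shows "inv e \<otimes> a \<otimes> e \<in> Div G M e"
proof -
  note b = balanced_props[OF assms(1)]
  have c: "inv a \<otimes> e \<in> Div G M e" by (rule div_compl[OF assms])
  have x: "inv (inv a \<otimes> e) \<otimes> e \<in> Div G M e" by (rule div_compl[OF assms(1) c])
  have ec: "a \<in> carrier G" "e \<in> carrier G" using assms b Div_carr by auto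
  have "inv (inv a \<otimes> e) \<otimes> e = inv e \<otimes> a \<otimes> e" using ec
    by (simp add: inv_mult_group)
  then show ?thesis using x by simp
qed

lemma div_conjR:
  assumes "balanced G M e" "a \<in> Div G M e"
  shows "e \<otimes> a \<otimes> inv e \<in> Div G M e"
proof -
  note b = balanced_props[OF assms(1)]
  have a: "a \<in> M" "inv a \<otimes> e \<in> M" "e \<otimes> inv a \<in> M" using assms b by auto
  have ec: "e \<in> carrier G" "a \<in> carrier G" using a b by auto
  have c: "e \<otimes> inv a \<in> Div G M e"
  proof -
    have "inv (e \<otimes> inv a) \<otimes> e = a" using ec by (simp add: inv_mult_group m_assoc)
    then show ?thesis using a b(2) by auto
  qed
  have "e \<otimes> inv (e \<otimes> inv a) \<in> M" using c b(3) by auto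
  moreover have "e \<otimes> inv (e \<otimes> inv a) = e \<otimes> a \<otimes> inv e" using ec by (simp add: inv_mult_group m_assoc)
  moreover have "inv (e \<otimes> a \<otimes> inv e) \<otimes> e = e \<otimes> inv a" using ec by (simp add: inv_mult_group m_assoc)
  ultimately show ?thesis using a b(2) by auto
qed

lemma inv_cancel_left[simp]: "g \<in> carrier G \<Longrightarrow> y \<in> carrier G \<Longrightarrow> inv g \<otimes> (g \<otimes> y) = y"
  by (simp add: m_assoc[symmetric])

lemma inv_cancel_left2[simp]: "g \<in> carrier G \<Longrightarrow> y \<in> carrier G \<Longrightarrow> g \<otimes> (inv g \<otimes> y) = y"
  by (simp add: m_assoc[symmetric])

lemma conj_wprod: "g \<in> carrier G \<Longrightarrow> set ws \<subseteq> carrier G \<Longrightarrow>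
  g \<otimes> wprod G ws \<otimes> inv g = wprod G (map (\<lambda>x. g \<otimes> x \<otimes> inv g) ws)"
proof (induct ws)
  case Nil then show ?case by (simp add: wprod_Nil)
next
  case (Cons x ws)
  then have w: "wprod G ws \<in> carrier G" "x \<in> carrier G" by (auto intro: wprod_closed)
  have "g \<otimes> (x \<otimes> wprod G ws) \<otimes> inv g = (g \<otimes> x \<otimes> inv g) \<otimes> (g \<otimes> wprod G ws \<otimes> inv g)"
    using w Cons(2) by (simp add: m_assoc)
  then show ?case using Cons by (simp add: wprod_Cons)
qed

lemma conj_pow_L:
  assumes "balanced G M e" "a \<in> Div G M e"
  shows "inv (e [^] (k::nat)) \<otimes> a \<otimes> e [^] k \<in> Div G M e"
proof (induct k)
  case 0 have "a \<in> carrier G" using assms Div_carr M_carr by blast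
  then show ?case using assms by simp
next
  case (Suc k)
  have ec: "e \<in> carrier G" "a \<in> carrier G" using assms balanced_props Div_carr by auto
  have "inv e \<otimes> (inv (e [^] k) \<otimes> a \<otimes> e [^] k) \<otimes> e \<in> Div G M e" by (rule div_conjL[OF assms(1) Suc])
  moreover have "inv e \<otimes> (inv (e [^] k) \<otimes> a \<otimes> e [^] k) \<otimes> e = inv (e [^] Suc k) \<otimes> a \<otimes> e [^] Suc k"
    using ec by (simp add: inv_mult_group m_assoc)
  ultimately show ?case by simp
qed

lemma conj_pow_R:
  assumes "balanced G M e" "a \<in> Div G M e"
  shows "e [^] (k::nat) \<otimes> a \<otimes> inv (e [^] k) \<in> Div G M e"
proof (induct k)
  case 0 have "a \<in> carrier G" using assms Div_carr M_carr by blast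
  then show ?case using assms by simp
next
  case (Suc k)
  have ec: "e \<in> carrier G" "a \<in> carrier G" using assms balanced_props Div_carr by auto
  have "e \<otimes> (e [^] k \<otimes> a \<otimes> inv (e [^] k)) \<otimes> inv e \<in> Div G M e" by (rule div_conjR[OF assms(1) Suc])
  moreover have "e \<otimes> (e [^] k \<otimes> a \<otimes> inv (e [^] k)) \<otimes> inv e = e [^] Suc k \<otimes> a \<otimes> inv (e [^] Suc k)"
    using ec unfolding nat_pow_Suc2[OF ec(1)] by (simp add: inv_mult_group m_assoc del: nat_pow_Suc)
  ultimately show ?case by simp
qed

lemma conj_pow_gen_L:
  assumes "balanced G M e" "x \<in> monoid_gen G (Div G M e)"
  shows "inv (e [^] (k::nat)) \<otimes> x \<otimes> e [^] k \<in> monoid_gen G (Div G M e)"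
proof -
  obtain ws where ws: "set ws \<subseteq> Div G M e" "x = wprod G ws" using assms(2) by (auto simp: monoid_gen_def)
  have ec: "e \<in> carrier G" using assms balanced_props by auto
  have c: "set ws \<subseteq> carrier G" using ws Div_carr M_carr by blast
  have "inv (e [^] k) \<otimes> x \<otimes> inv (inv (e [^] k)) = wprod G (map (\<lambda>y. inv (e [^] k) \<otimes> y \<otimes> inv (inv (e [^] k))) ws)"
    unfolding ws(2) by (rule conj_wprod) (use ec c in auto)
  then have eq: "inv (e [^] k) \<otimes> x \<otimes> e [^] k = wprod G (map (\<lambda>y. inv (e [^] k) \<otimes> y \<otimes> e [^] k) ws)"
    using ec by simp
  moreover have "set (map (\<lambda>y. inv (e [^] k) \<otimes> y \<otimes> e [^] k) ws) \<subseteq> Div G M e"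
    using ws(1) conj_pow_L[OF assms(1)] ec by auto
  ultimately show ?thesis unfolding monoid_gen_def by blast
qed

lemma conj_pow_gen_R:
  assumes "balanced G M e" "x \<in> monoid_gen G (Div G M e)"
  shows "e [^] (k::nat) \<otimes> x \<otimes> inv (e [^] k) \<in> monoid_gen G (Div G M e)"
proof -
  obtain ws where ws: "set ws \<subseteq> Div G M e" "x = wprod G ws" using assms(2) by (auto simp: monoid_gen_def)
  have ec: "e \<in> carrier G" using assms balanced_props by auto
  have c: "set ws \<subseteq> carrier G" using ws Div_carr M_carr by blast
  have "e [^] k \<otimes> x \<otimes> inv (e [^] k) = wprod G (map (\<lambda>y. e [^] k \<otimes> y \<otimes> inv (e [^] k)) ws)"
    unfolding ws(2) by (rule conj_wprod) (use ec c in auto)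
  moreover have "set (map (\<lambda>y. e [^] k \<otimes> y \<otimes> inv (e [^] k)) ws) \<subseteq> Div G M e"
    using ws(1) conj_pow_R[OF assms(1)] ec by auto
  ultimately show ?thesis unfolding monoid_gen_def by blast
qed

lemma gen_mult: "x \<in> monoid_gen G A \<Longrightarrow> y \<in> monoid_gen G A \<Longrightarrow> A \<subseteq> carrier G \<Longrightarrow> x \<otimes> y \<in> monoid_gen G A"
  unfolding monoid_gen_def
proof clarify
  fix xs ys assume "set xs \<subseteq> A" "set ys \<subseteq> A" "A \<subseteq> carrier G"
  then show "\<exists>ws. wprod G xs \<otimes> wprod G ys = wprod G ws \<and> set ws \<subseteq> A"
    by (intro exI[of _ "xs @ ys"]) (auto simp: wprod_append)
qed

lemma gen_incl: "a \<in> A \<Longrightarrow> a \<in> carrier G \<Longrightarrow> a \<in> monoid_gen G A"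
  unfolding monoid_gen_def by (intro CollectI exI[of _ "[a]"]) (auto simp: wprod_Cons wprod_Nil)

lemma gen_one: "\<one> \<in> monoid_gen G A"
  unfolding monoid_gen_def by (intro CollectI exI[of _ "[]"]) (auto simp: wprod_Nil)

abbreviation "D \<equiv> Div G M \<Delta>"
abbreviation "E \<equiv> Div G M \<delta>"

lemma balD: "balanced G M \<Delta>" and Dfin: "finite D" and genM: "monoid_gen G D = M"
  and genG: "generate G D = carrier G" and latt: "leL_lattice G M"
  using gs unfolding garside_structure_def by blast+

lemma balE: "balanced G M \<delta>" and H_def: "H = generate G E" and N_def: "N = monoid_gen G E"
  and E_eq: "E = D \<inter> N"
  using ps unfolding parabolic_substructure_def by blast+

lemma Delta_M: "\<Delta> \<in> M" and delta_M: "\<delta> \<in> M" using balD balE balanced_props by auto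
lemma Delta_c[simp]: "\<Delta> \<in> carrier G" and delta_c[simp]: "\<delta> \<in> carrier G" using Delta_M delta_M by auto

lemma E_M: "E \<subseteq> M" and D_M: "D \<subseteq> M" using Div_carr by auto
lemma E_c: "E \<subseteq> carrier G" and D_c: "D \<subseteq> carrier G" using E_M D_M M_carr by auto

lemma N_M: "N \<subseteq> M"
  using N_def monoid_gen_M E_M by (auto simp: monoid_gen_def)

lemma delta_E: "\<delta> \<in> E" using delta_M balanced_props(2)[OF balE] one_M by auto
lemma Delta_D: "\<Delta> \<in> D" using Delta_M balanced_props(2)[OF balD] one_M by auto
lemma E_D: "E \<subseteq> D" using E_eq by auto
lemma delta_D: "\<delta> \<in> D" using delta_E E_D by auto

lemma delta_ne: "\<delta> \<noteq> \<one>"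
proof
  assume d: "\<delta> = \<one>"
  have "E \<subseteq> {\<one>}"
  proof
    fix x assume "x \<in> E"
    then have xm: "x \<in> M" "inv x \<otimes> \<one> \<in> M" using balanced_props(2)[OF balE] d by auto
    then have "x \<in> carrier G" using M_carr by blast
    then have "x \<in> M" "inv x \<in> M" using xm by auto
    then show "x \<in> {\<one>}" using M_inv by auto
  qed
  have "x \<in> {\<one>}" if "x \<in> generate G E" for x
    using that by induct (use \<open>E \<subseteq> {\<one>}\<close> in auto)
  then have "H \<subseteq> {\<one>}" unfolding H_def by auto
  moreover have "\<one> \<in> H" unfolding H_def by (rule generate.one)
  ultimately show False using Hne1 by auto
qed


abbreviation "S \<equiv> D - {\<one>}"

lemma SD_c: "S \<union> (\<lambda>x. inv x) ` S \<subseteq> carrier G" "D \<union> (\<lambda>x. inv x) ` D \<subseteq> carrier G" using D_c by auto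

lemma gen_words: "x \<in> generate G D \<Longrightarrow> \<exists>ws. set ws \<subseteq> S \<union> (\<lambda>x. inv x) ` S \<and> wprod G ws = x"
proof (induct x rule: generate.induct)
  case one then show ?case by (intro exI[of _ "[]"]) (simp add: wprod_Nil)
next
  case (incl h) show ?case
  proof (cases "h = \<one>")
    case True then show ?thesis by (intro exI[of _ "[]"]) (simp add: wprod_Nil)
  next
    case False then show ?thesis using incl D_c by (intro exI[of _ "[h]"]) (auto simp: wprod_Nil wprod_Cons)
  qed
next
  case (inv h) show ?case
  proof (cases "h = \<one>")
    case True then show ?thesis by (intro exI[of _ "[]"]) (simp add: wprod_Nil)
  next
    case False then show ?thesis using inv D_c by (intro exI[of _ "[inv h]"]) (auto simp: wprod_Nil wprod_Cons)
  qed
next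
  case (eng h1 h2)
  then obtain xs ys where xs: "set xs \<subseteq> S \<union> (\<lambda>x. inv x) ` S" "wprod G xs = h1" and ys: "set ys \<subseteq> S \<union> (\<lambda>x. inv x) ` S" "wprod G ys = h2"
    by blast
  moreover have "set xs \<subseteq> carrier G" "set ys \<subseteq> carrier G" using xs ys SD_c(1) by blast+
  ultimately show ?case by (intro exI[of _ "xs @ ys"]) (simp add: wprod_append)
qed

lemma wprod_filter: "set ws \<subseteq> carrier G \<Longrightarrow> wprod G (filter (\<lambda>x. x \<noteq> \<one>) ws) = wprod G ws"
  by (induct ws) (auto simp: wprod_Cons wprod_Nil wprod_closed)

lemma wl_le: assumes "set ws \<subseteq> D \<union> (\<lambda>x. inv x) ` D"
  shows "word_len G S (wprod G ws) \<le> length ws"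
proof -
  let ?f = "filter (\<lambda>x. x \<noteq> \<one>) ws"
  have c: "set ws \<subseteq> carrier G" using assms SD_c by blast
  have "set ?f \<subseteq> S \<union> (\<lambda>x. inv x) ` S"
  proof
    fix x assume x: "x \<in> set ?f"
    then have "x \<noteq> \<one>" "x \<in> D \<union> (\<lambda>x. inv x) ` D" using assms by auto
    then show "x \<in> S \<union> (\<lambda>x. inv x) ` S" using D_c by auto
  qed
  then have "word_len G S (wprod G ws) \<le> length ?f"
    unfolding word_len_def using wprod_filter[OF c] by (intro Least_le) blast
  also have "\<dots> \<le> length ws" by simp
  finally show ?thesis .
qed

lemma wl_wit: assumes "x \<in> carrier G"
  shows "\<exists>ws. length ws = word_len G S x \<and> set ws \<subseteq> S \<union> (\<lambda>x. inv x) ` S \<and> wprod G ws = x"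
proof -
  obtain ws where "set ws \<subseteq> S \<union> (\<lambda>x. inv x) ` S" "wprod G ws = x" using gen_words assms genG by blast
  then have "\<exists>n ws. length ws = n \<and> set ws \<subseteq> S \<union> (\<lambda>x. inv x) ` S \<and> wprod G ws = x" by blast
  then show ?thesis unfolding word_len_def by (rule LeastI_ex)
qed

lemma pow_M: "g \<in> M \<Longrightarrow> g [^] (k::nat) \<in> M"
  by (induct k) (auto simp: one_M M_mult)

lemma lowA: "set ws \<subseteq> D \<union> (\<lambda>x. inv x) ` D \<Longrightarrow> \<Delta> [^] (length ws) \<otimes> wprod G ws \<in> M"
proof (induct ws)
  case Nil then show ?case by (simp add: wprod_Nil one_M)
next
  case (Cons l ws)
  let ?n = "length ws"
  have IH: "\<Delta> [^] ?n \<otimes> wprod G ws \<in> M" using Cons by auto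
  have lc: "l \<in> carrier G" and wc: "wprod G ws \<in> carrier G" using Cons SD_c by (auto intro!: wprod_closed)
  have dl: "\<Delta> \<otimes> l \<in> M"
  proof (cases "l \<in> D")
    case True then show ?thesis using D_M Delta_M M_mult by auto
  next
    case False
    then obtain a where "a \<in> D" "l = inv a" using Cons by auto
    then show ?thesis using balanced_props(3)[OF balD] by auto
  qed
  have "\<Delta> [^] ?n \<otimes> (\<Delta> \<otimes> l) \<otimes> inv (\<Delta> [^] ?n) \<in> M"
    using conj_pow_gen_R[OF balD, of "\<Delta> \<otimes> l" ?n] dl genM by auto
  then have "(\<Delta> [^] ?n \<otimes> (\<Delta> \<otimes> l) \<otimes> inv (\<Delta> [^] ?n)) \<otimes> (\<Delta> [^] ?n \<otimes> wprod G ws) \<in> M"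
    using IH M_mult by blast
  moreover have "(\<Delta> [^] ?n \<otimes> (\<Delta> \<otimes> l) \<otimes> inv (\<Delta> [^] ?n)) \<otimes> (\<Delta> [^] ?n \<otimes> wprod G ws)
      = \<Delta> [^] length (l # ws) \<otimes> wprod G (l # ws)"
    using lc wc by (simp add: m_assoc wprod_Cons)
  ultimately show ?case by simp
qed

lemma leL_M: "leL G M \<one> x \<longleftrightarrow> x \<in> M" if "x \<in> carrier G" using that by (simp add: leL_def)

lemma glb: assumes "x \<in> carrier G" "y \<in> carrier G"
  shows "\<exists>c\<in>carrier G. leL G M c x \<and> leL G M c y \<and> (\<forall>e\<in>carrier G. leL G M e x \<and> leL G M e y \<longrightarrow> leL G M e c)"
proof -
  have "\<forall>a\<in>carrier G. \<forall>b\<in>carrier G. \<exists>c\<in>carrier G. leL G M c a \<and> leL G M c b \<and> (\<forall>e\<in>carrier G. leL G M e a \<and> leL G M e b \<longrightarrow> leL G M e c)"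
    using latt unfolding leL_lattice_def by blast
  then show ?thesis using assms by blast
qed

lemma core: "set ws \<subseteq> E \<Longrightarrow> z \<in> M \<Longrightarrow> leL G M z \<Delta> \<Longrightarrow> leL G M z (wprod G ws) \<Longrightarrow> leL G M z \<delta>"
proof (induct ws arbitrary: z)
  case Nil
  then have zc: "z \<in> carrier G" by auto
  then have "inv z \<in> M" using Nil by (simp add: leL_def wprod_Nil)
  then have "z = \<one>" using M_inv Nil by auto
  then show ?case by (simp add: leL_def delta_M)
next
  case (Cons a ws)
  let ?n = "wprod G ws"
  have nN: "?n \<in> N" using Cons(2) E_c unfolding N_def monoid_gen_def by auto
  then have nM: "?n \<in> M" using N_M by auto
  then have nc: "?n \<in> carrier G" by auto
  have aE: "a \<in> E" using Cons by auto
  then have aD: "a \<in> D" using E_D by auto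
  then have aM: "a \<in> M" and ac: "a \<in> carrier G" using D_M by auto
  have zc: "z \<in> carrier G" using Cons by auto
  obtain w where wc: "w \<in> carrier G" and w1: "leL G M w ?n" and w2: "leL G M w \<Delta>"
    and w3: "\<forall>e\<in>carrier G. leL G M e ?n \<and> leL G M e \<Delta> \<longrightarrow> leL G M e w"
    using glb[OF nc Delta_c] by blast
  have "leL G M \<one> w" using w3 leL_M nM nc Delta_M by simp
  then have wM: "w \<in> M" using leL_M wc by simp
  have wd: "leL G M w \<delta>" using Cons(1)[of w] Cons(2) wM w1 w2 by auto
  have awc: "a \<otimes> w \<in> carrier G" using ac wc by simp
  obtain u where uc: "u \<in> carrier G" and u1: "leL G M u (a \<otimes> w)" and u2: "leL G M u \<Delta>"
    and u3: "\<forall>e\<in>carrier G. leL G M e (a \<otimes> w) \<and> leL G M e \<Delta> \<longrightarrow> leL G M e u"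
    using glb[OF awc Delta_c] by blast
  have "leL G M a (a \<otimes> w)" using ac wc wM by (simp add: leL_def)
  moreover have "leL G M a \<Delta>" using aD balanced_props(2)[OF balD] by (simp add: leL_def)
  ultimately have "leL G M a u" using u3 ac by blast
  then have vM: "inv a \<otimes> u \<in> M" by (simp add: leL_def)
  define v where "v = inv a \<otimes> u"
  have vc: "v \<in> carrier G" using v_def ac uc by simp
  have uav: "u = a \<otimes> v" using v_def ac uc by simp
  have "leL G M v w" using u1 leL_cancel[OF ac vc wc] uav by simp
  then have "leL G M v \<delta>" using wd leL_trans vc wc by auto
  then have vE: "v \<in> E" using vM v_def balanced_props(2)[OF balE] by (simp add: leL_def)
  have uN: "u \<in> N" unfolding uav N_def
    by (rule gen_mult) (use aE vE E_c gen_incl in auto)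
  then have "u \<in> M" using N_M by auto
  then have "u \<in> D" using u2 balanced_props(2)[OF balD] by (simp add: leL_def)
  then have "u \<in> E" using uN E_eq by auto
  then have ud: "leL G M u \<delta>" using balanced_props(2)[OF balE] by (simp add: leL_def)
  have "inv \<Delta> \<otimes> a \<otimes> \<Delta> \<in> D" using div_conjL[OF balD aD] .
  then have "inv \<Delta> \<otimes> (a \<otimes> \<Delta>) \<in> M" using D_M ac by (auto simp: m_assoc)
  then have "leL G M \<Delta> (a \<otimes> \<Delta>)" by (simp add: leL_def)
  then have zaD: "leL G M z (a \<otimes> \<Delta>)" using Cons(4) leL_trans zc ac by auto
  define z' where "z' = inv a \<otimes> z"
  have z'c: "z' \<in> carrier G" using z'_def ac zc by simp
  have zaz: "z = a \<otimes> z'" using z'_def ac zc by simp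
  have "leL G M z' ?n" using Cons(5) leL_cancel[OF ac z'c nc] zaz by (simp add: wprod_Cons)
  moreover have "leL G M z' \<Delta>" using zaD leL_cancel[OF ac z'c Delta_c] zaz by simp
  ultimately have "leL G M z' w" using w3 z'c by blast
  then have "leL G M z (a \<otimes> w)" using leL_cancel[OF ac z'c wc] zaz by simp
  then have "leL G M z u" using u3 zc Cons(4) by blast
  then show ?case using ud leL_trans zc uc by auto
qed


lemma Hform: "h \<in> H \<Longrightarrow> \<exists>n\<in>N. \<exists>j::nat. h = n \<otimes> inv (\<delta> [^] j)"
  unfolding H_def
proof (induct h rule: generate.induct)
  case one then show ?case using gen_one[of E] N_def by (intro bexI[of _ "\<one>"] exI[of _ 0]) auto
next
  case (incl h)
  then have "h \<in> N" "h \<in> carrier G" using N_def gen_incl E_c by auto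
  then show ?case by (intro bexI[of _ h] exI[of _ 0]) auto
next
  case (inv h)
  have hc: "h \<in> carrier G" using inv E_c by auto
  have b: "inv h \<otimes> \<delta> \<in> E" using div_compl[OF balE inv] .
  then have "inv h \<otimes> \<delta> \<in> N" using N_def gen_incl E_c by auto
  moreover have "inv h = (inv h \<otimes> \<delta>) \<otimes> inv (\<delta> [^] (1::nat))" using hc by (simp add: m_assoc)
  ultimately show ?case by blast
next
  case (eng h1 h2)
  then obtain n1 j1 n2 j2 where n1: "n1 \<in> N" "h1 = n1 \<otimes> inv (\<delta> [^] (j1::nat))"
    and n2: "n2 \<in> N" "h2 = n2 \<otimes> inv (\<delta> [^] (j2::nat))" by blast
  have c: "n1 \<in> carrier G" "n2 \<in> carrier G" using n1 n2 N_M by auto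
  have cN: "inv (\<delta> [^] j1) \<otimes> n2 \<otimes> \<delta> [^] j1 \<in> N"
    using conj_pow_gen_L[OF balE, where x=n2 and k=j1] n2 N_def by auto
  then have "n1 \<otimes> (inv (\<delta> [^] j1) \<otimes> n2 \<otimes> \<delta> [^] j1) \<in> N"
    using n1 N_def gen_mult E_c by auto
  moreover have "h1 \<otimes> h2 = (n1 \<otimes> (inv (\<delta> [^] j1) \<otimes> n2 \<otimes> \<delta> [^] j1)) \<otimes> inv (\<delta> [^] (j2 + j1))"
  proof -
    have "inv (\<delta> [^] (j2 + j1)) = inv (\<delta> [^] j1) \<otimes> inv (\<delta> [^] j2)"
      using nat_pow_mult[of \<delta> j2 j1, symmetric] by (simp add: inv_mult_group)
    then show ?thesis using n1 n2 c by (simp add: m_assoc)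
  qed
  ultimately show ?case by blast
qed

lemma H_c: "H \<subseteq> carrier G" using H_def generate_incl E_c by auto

lemma noDelta: assumes "h \<in> H" shows "inv \<Delta> \<otimes> h \<notin> M"
proof
  assume m: "inv \<Delta> \<otimes> h \<in> M"
  obtain n j where n: "n \<in> N" "h = n \<otimes> inv (\<delta> [^] (j::nat))" using Hform assms by blast
  have hc: "h \<in> carrier G" using assms H_c by auto
  have nc: "n \<in> carrier G" using n N_M by auto
  have "n = h \<otimes> \<delta> [^] j" using n nc by (simp add: m_assoc)
  then have "inv \<Delta> \<otimes> n = (inv \<Delta> \<otimes> h) \<otimes> \<delta> [^] j" using hc by (simp add: m_assoc)
  then have "inv \<Delta> \<otimes> n \<in> M" using m pow_M[OF delta_M] M_mult by simp
  then have l: "leL G M \<Delta> n" by (simp add: leL_def)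
  obtain ws where ws: "set ws \<subseteq> E" "n = wprod G ws" using n N_def unfolding monoid_gen_def by auto
  have dd: "leL G M \<Delta> \<delta>" using core[OF ws(1) Delta_M leL_refl[OF Delta_c]] l ws by simp
  have "D \<subseteq> E"
  proof
    fix a assume a: "a \<in> D"
    then have "a \<in> M" "leL G M a \<Delta>" using balanced_props(2)[OF balD] by (auto simp: leL_def)
    moreover have "a \<in> carrier G" using a D_c by auto
    ultimately have "leL G M a \<delta>" using leL_trans[OF _ dd] by auto
    then show "a \<in> E" using \<open>a \<in> M\<close> balanced_props(2)[OF balE] by (simp add: leL_def)
  qed
  then have "generate G D \<subseteq> generate G E" by (rule mono_generate)
  then have "carrier G \<subseteq> H" using genG H_def by simp
  then show False using H_c HneG by auto
qed

lemma wprod_rep: assumes "g \<in> carrier G" shows "wprod G (replicate k g) = g [^] k"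
proof (induct k)
  case 0 then show ?case by (simp add: wprod_Nil)
next
  case (Suc k)
  have "g [^] Suc k = g \<otimes> g [^] k" by (rule nat_pow_Suc2[OF assms])
  then show ?case using Suc by (simp add: wprod_Cons del: nat_pow_Suc)
qed

lemma dist_lower: assumes "b \<in> H" shows "k \<le> wdist G S (\<Delta> [^] k) b"
proof (rule ccontr)
  assume "\<not> k \<le> wdist G S (\<Delta> [^] k) b"
  then have lt: "word_len G S (inv (\<Delta> [^] k) \<otimes> b) < k" by (simp add: wdist_def)
  have bc: "b \<in> carrier G" using assms H_c by auto
  obtain ws where ws: "length ws = word_len G S (inv (\<Delta> [^] k) \<otimes> b)" "set ws \<subseteq> S \<union> (\<lambda>x. inv x) ` S"
    "wprod G ws = inv (\<Delta> [^] k) \<otimes> b" using wl_wit[of "inv (\<Delta> [^] k) \<otimes> b"] bc by auto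
  let ?n = "length ws"
  have "\<Delta> [^] ?n \<otimes> (inv (\<Delta> [^] k) \<otimes> b) \<in> M" using lowA[of ws] ws by auto
  then have "\<Delta> [^] (k - 1 - ?n) \<otimes> (\<Delta> [^] ?n \<otimes> (inv (\<Delta> [^] k) \<otimes> b)) \<in> M"
    using M_mult pow_M[OF Delta_M] by blast
  moreover have "\<Delta> [^] (k - 1 - ?n) \<otimes> (\<Delta> [^] ?n \<otimes> (inv (\<Delta> [^] k) \<otimes> b)) = inv \<Delta> \<otimes> b"
  proof -
    obtain k' where k: "k = Suc k'" using lt by (cases k) auto
    have "\<Delta> [^] (k - 1 - ?n) \<otimes> \<Delta> [^] ?n = \<Delta> [^] k'" using nat_pow_mult[of \<Delta> "k - 1 - ?n" ?n] lt ws(1) k by simp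
    moreover have "inv (\<Delta> [^] k) = inv (\<Delta> [^] k') \<otimes> inv \<Delta>"
    proof -
      have e: "\<Delta> [^] Suc k' = \<Delta> \<otimes> \<Delta> [^] k'" by (rule nat_pow_Suc2) simp
      show ?thesis unfolding k e by (simp add: inv_mult_group del: nat_pow_Suc)
    qed
    ultimately show ?thesis using bc by (simp add: m_assoc[symmetric])
  qed
  ultimately show False using noDelta[OF assms] by simp
qed

lemma dist_one: "wdist G S (\<Delta> [^] k) \<one> \<le> k"
proof -
  have "word_len G S (wprod G (replicate k (inv \<Delta>))) \<le> length (replicate k (inv \<Delta>))"
    by (rule wl_le) (use Delta_D in auto)
  then show ?thesis by (simp add: wdist_def wprod_rep nat_pow_inv)
qed

lemma word_dd: "\<exists>ws. length ws = k \<and> set ws \<subseteq> D \<union> (\<lambda>x. inv x) ` D \<and> wprod G ws = inv (\<Delta> [^] k) \<otimes> \<delta> [^] k"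
proof (induct k)
  case 0 then show ?case by (intro exI[of _ "[]"]) (simp add: wprod_Nil)
next
  case (Suc k)
  then obtain ws where ws: "length ws = k" "set ws \<subseteq> D \<union> (\<lambda>x. inv x) ` D" "wprod G ws = inv (\<Delta> [^] k) \<otimes> \<delta> [^] k" by blast
  have c: "inv \<delta> \<otimes> \<Delta> \<in> D" using div_compl[OF balD delta_D] .
  let ?l = "inv (\<Delta> [^] k) \<otimes> (inv \<delta> \<otimes> \<Delta>) \<otimes> \<Delta> [^] k"
  have lD: "?l \<in> D" using conj_pow_L[OF balD c] .
  have "inv ?l = inv (\<Delta> [^] k) \<otimes> (inv \<Delta> \<otimes> \<delta>) \<otimes> \<Delta> [^] k"
    by (simp add: inv_mult_group m_assoc)
  moreover have "inv (\<Delta> [^] Suc k) \<otimes> \<delta> [^] Suc k = (inv (\<Delta> [^] k) \<otimes> (inv \<Delta> \<otimes> \<delta>) \<otimes> \<Delta> [^] k) \<otimes> (inv (\<Delta> [^] k) \<otimes> \<delta> [^] k)"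
  proof -
    have e1: "\<Delta> [^] Suc k = \<Delta> \<otimes> \<Delta> [^] k" by (rule nat_pow_Suc2) simp
    have e2: "\<delta> [^] Suc k = \<delta> \<otimes> \<delta> [^] k" by (rule nat_pow_Suc2) simp
    show ?thesis unfolding e1 e2 by (simp add: inv_mult_group m_assoc del: nat_pow_Suc)
  qed
  ultimately have "wprod G (inv ?l # ws) = inv (\<Delta> [^] Suc k) \<otimes> \<delta> [^] Suc k"
    using ws by (simp add: wprod_Cons)
  moreover have "set (inv ?l # ws) \<subseteq> D \<union> (\<lambda>x. inv x) ` D" using lD ws by auto
  ultimately show ?case using ws(1) by (intro exI[of _ "inv ?l # ws"]) auto
qed

lemma dist_dd: "wdist G S (\<Delta> [^] k) (\<delta> [^] k) \<le> k"
  using word_dd[of k] wl_le unfolding wdist_def by fastforce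

lemma set_dist_eq: "set_dist G S (\<Delta> [^] k) H = k"
  unfolding set_dist_def
proof (rule Least_equality)
  have "\<one> \<in> H" using H_def generate.one by auto
  moreover have "wdist G S (\<Delta> [^] k) \<one> = k" using dist_one[of k] dist_lower[OF \<open>\<one> \<in> H\<close>, of k] by linarith
  ultimately show "\<exists>b\<in>H. wdist G S (\<Delta> [^] k) b = k" by blast
next
  fix y assume "\<exists>b\<in>H. wdist G S (\<Delta> [^] k) b = y"
  then show "k \<le> y" using dist_lower by auto
qed

lemma proj_mem: "\<one> \<in> proj G S H (\<Delta> [^] (k::nat))" "\<delta> [^] k \<in> proj G S H (\<Delta> [^] k)"
proof -
  have h1: "\<one> \<in> H" using H_def generate.one by auto
  have "\<delta> [^] j \<in> H" for j :: nat
  proof (induct j)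
    case 0 then show ?case using h1 by simp
  next
    case (Suc j)
    have "\<delta> \<in> H" unfolding H_def by (rule generate.incl[OF delta_E])
    then show ?case using Suc unfolding H_def by (simp add: generate.eng)
  qed
  then have h2: "\<delta> [^] k \<in> H" by blast
  show "\<one> \<in> proj G S H (\<Delta> [^] k)" unfolding proj_def set_dist_eq
    using h1 le_antisym[OF dist_one[of k] dist_lower[OF h1, of k]] by simp
  show "\<delta> [^] k \<in> proj G S H (\<Delta> [^] k)" unfolding proj_def set_dist_eq
    using h2 le_antisym[OF dist_dd[of k] dist_lower[OF h2, of k]] by simp
qed

lemma unbounded: "\<exists>k::nat. word_len G S (\<delta> [^] k) > R"
proof (rule ccontr)
  assume "\<not> ?thesis"
  then have le: "word_len G S (\<delta> [^] k) \<le> R" for k :: nat by (simp add: not_less)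
  let ?A = "S \<union> (\<lambda>x. inv x) ` S"
  have finA: "finite ?A" using Dfin by auto
  let ?B = "wprod G ` {ws. set ws \<subseteq> ?A \<and> length ws \<le> R}"
  have finB: "finite ?B" using finite_lists_length_le[OF finA, of R] by auto
  have sub: "range (\<lambda>k::nat. \<delta> [^] k) \<subseteq> ?B"
  proof clarify
    fix k :: nat
    obtain ws where w: "length ws = word_len G S (\<delta> [^] k)" "set ws \<subseteq> ?A" "wprod G ws = \<delta> [^] k"
      using wl_wit[of "\<delta> [^] k"] by auto
    then show "\<delta> [^] k \<in> ?B" using le[of k] by (intro image_eqI[of _ _ ws]) auto
  qed
  have "inj (\<lambda>k::nat. \<delta> [^] k)"
  proof (rule injI)
    have key: "\<delta> [^] (Suc m) \<noteq> \<one>" for m :: nat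
    proof
      assume a: "\<delta> [^] Suc m = \<one>"
      have b: "\<delta> [^] m \<otimes> \<delta> = \<one>" using a by (simp only: nat_pow_Suc)
      have c: "inv \<delta> = \<delta> [^] m" by (rule inv_equality[OF b delta_c nat_pow_closed[OF delta_c]])
      have "\<delta> [^] m \<in> M" by (rule pow_M[OF delta_M])
      then have "inv \<delta> \<in> M" unfolding c .
      then have "\<delta> = \<one>" by (rule M_inv[OF delta_M])
      then show False using delta_ne by contradiction
    qed
    have ne: "\<delta> [^] i \<noteq> \<delta> [^] j" if lt: "i < j" for i j :: nat
    proof
      assume e: "\<delta> [^] i = \<delta> [^] j"
      obtain m where j0: "j = Suc (i + m)" using less_imp_Suc_add[OF lt] by blast
      then have j: "j = i + Suc m" by simp
      have m1: "\<delta> [^] i \<otimes> \<delta> [^] Suc m = \<delta> [^] j"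
        unfolding j by (rule nat_pow_mult[OF delta_c])
      have "\<delta> [^] Suc m = inv (\<delta> [^] i) \<otimes> (\<delta> [^] i \<otimes> \<delta> [^] Suc m)"
        by (simp del: nat_pow_Suc)
      also have "\<dots> = inv (\<delta> [^] i) \<otimes> \<delta> [^] i" unfolding m1 e[symmetric] ..
      also have "\<dots> = \<one>" by (simp del: nat_pow_Suc)
      finally have "\<delta> [^] Suc m = \<one>" .
      then show False using key[of m] by blast
    qed
    fix i j :: nat assume "\<delta> [^] i = \<delta> [^] j"
    then show "i = j"
    proof (cases i j rule: linorder_cases)
      case less then show ?thesis using ne[OF less] \<open>\<delta> [^] i = \<delta> [^] j\<close> by blast
    next
      case greater then show ?thesis using ne[OF greater] \<open>\<delta> [^] i = \<delta> [^] j\<close> by simp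
    qed
  qed
  moreover have "finite (range (\<lambda>k::nat. \<delta> [^] k))" by (rule finite_subset[OF sub finB])
  ultimately have "finite (UNIV :: nat set)" using finite_imageD by blast
  then show False by simp
qed

lemma wl_delta: "word_len G S \<delta> = 1"
proof -
  have "word_len G S (wprod G [\<delta>]) \<le> 1" using wl_le[of "[\<delta>]"] delta_D by auto
  then have le: "word_len G S \<delta> \<le> 1" by (simp add: wprod_Cons wprod_Nil)
  obtain ws where "length ws = word_len G S \<delta>" "wprod G ws = \<delta>" using wl_wit[of \<delta>] by auto
  then have "ws \<noteq> []" using delta_ne by (auto simp: wprod_Nil)
  then have "word_len G S \<delta> \<noteq> 0" using \<open>length ws = word_len G S \<delta>\<close> by (cases ws) auto
  then show ?thesis using le by simp
qed

end

theorem corollary5p4: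
  fixes G :: "('a, 'b) monoid_scheme" and M H N :: "'a set" and \<Delta> \<delta> :: 'a
  assumes "garside_structure G M \<Delta>"
    and "parabolic_substructure G M \<Delta> H N \<delta>"
    and "H \<noteq> carrier G"
    and "H \<noteq> {\<one>\<^bsub>G\<^esub>}"
  shows "\<not> (\<exists>K::real. K > 0 \<and>
           (\<forall>\<alpha>1\<in>carrier G. \<forall>\<alpha>2\<in>carrier G.
              wdist G (Div G M \<Delta> - {\<one>\<^bsub>G\<^esub>}) \<alpha>1 \<alpha>2 = 1 \<longrightarrow>
              diam_le G (Div G M \<Delta> - {\<one>\<^bsub>G\<^esub>})
                 (proj G (Div G M \<Delta> - {\<one>\<^bsub>G\<^esub>}) H \<alpha>1 \<union> proj G (Div G M \<Delta> - {\<one>\<^bsub>G\<^esub>}) H \<alpha>2) K))"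
proof
  have grp: "group G" using assms(1) by (simp add: garside_structure_def pos_submonoid_def)
  interpret g: gar G M \<Delta> H N \<delta>
    using grp assms by (simp add: gar_def gar_axioms_def)
  let ?S = "Div G M \<Delta> - {\<one>\<^bsub>G\<^esub>}"
  assume "\<exists>K::real. K > 0 \<and>
           (\<forall>\<alpha>1\<in>carrier G. \<forall>\<alpha>2\<in>carrier G.
              wdist G ?S \<alpha>1 \<alpha>2 = 1 \<longrightarrow>
              diam_le G ?S (proj G ?S H \<alpha>1 \<union> proj G ?S H \<alpha>2) K)"
  then obtain K :: real where K: "\<forall>\<alpha>1\<in>carrier G. \<forall>\<alpha>2\<in>carrier G.
              wdist G ?S \<alpha>1 \<alpha>2 = 1 \<longrightarrow>
              diam_le G ?S (proj G ?S H \<alpha>1 \<union> proj G ?S H \<alpha>2) K" by blast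
  obtain k :: nat where k: "word_len G ?S (\<delta> [^]\<^bsub>G\<^esub> k) > nat \<lceil>K\<rceil>" using g.unbounded by blast
  have c1: "\<Delta> [^]\<^bsub>G\<^esub> k \<in> carrier G" by simp
  have c2: "\<Delta> [^]\<^bsub>G\<^esub> k \<otimes>\<^bsub>G\<^esub> \<delta> \<in> carrier G" by simp
  have "wdist G ?S (\<Delta> [^]\<^bsub>G\<^esub> k) (\<Delta> [^]\<^bsub>G\<^esub> k \<otimes>\<^bsub>G\<^esub> \<delta>) = 1"
    unfolding wdist_def using g.wl_delta by (simp add: g.m_assoc[symmetric])
  then have "diam_le G ?S (proj G ?S H (\<Delta> [^]\<^bsub>G\<^esub> k) \<union> proj G ?S H (\<Delta> [^]\<^bsub>G\<^esub> k \<otimes>\<^bsub>G\<^esub> \<delta>)) K"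
    using K c1 c2 by blast
  then have "real (wdist G ?S \<one>\<^bsub>G\<^esub> (\<delta> [^]\<^bsub>G\<^esub> k)) \<le> K"
    using g.proj_mem[of k] unfolding diam_le_def by blast
  then have "real (word_len G ?S (\<delta> [^]\<^bsub>G\<^esub> k)) \<le> K" by (simp add: wdist_def)
  moreover have "K \<le> real (nat \<lceil>K\<rceil>)" by linarith
  ultimately show False using k by linarith
qed

end
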